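(* Let $m,n\geq 0$ be integers. Then \[ \sum_{k=1}^{n}\frac{(q/z;q)_{k}(z;q)_{n-k}(z;q)_m}{(q;q)_k (q;q)_{n-k}(q^k;q)_{m+1}}z^k -\sum_{k=1}^{m}\frac{(q/z;q)_{k}(z;q)_{m-k}(z;q)_n}{(q;q)_k (q;q)_{m-k}(q^k;q)_{n+1}}z^k \] \[ =\frac{(1-zq^{-1})(z;q)_m(z;q)_n}{(q;q)_{m}(q;q)_{n}}\left(\sum_{k=1}^m\frac{q^k}{(1-zq^{k-1})(1-q^k)}-\sum_{k=1}^n\frac{q^k}{(1-zq^{k-1})(1-q^k)}\right). \]
   Context: For $N\geq 0$, $(x;q)_N=(1-x)(1-xq)\cdots(1-xq^{N-1})$ (with $(x;q)_0=1$). The identity is one of rational functions in $q$ and $z$. *)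

theory Defs
  imports Complex_Main
begin

definition qpoch :: "'a::comm_ring_1 \<Rightarrow> 'a \<Rightarrow> nat \<Rightarrow> 'a" where
  "qpoch x q N = (\<Prod>i<N. 1 - x * q ^ i)"

end

theory Submission
  imports Defs
begin


lemma qpoch_0[simp]: "qpoch x q 0 = 1" by (simp add: qpoch_def)
lemma qpoch_Suc: "qpoch x q (Suc N) = qpoch x q N * (1 - x*q^N)"
  by (simp add: qpoch_def)
lemma qpoch_Suc_front: "qpoch x q (Suc N) = (1 - x) * qpoch (x*q) q N"
  unfolding qpoch_def prod.lessThan_Suc_shift by (simp add: mult.assoc)
lemma qpoch_zero_base[simp]: "qpoch 0 q N = 1" by (simp add: qpoch_def)
lemma qpoch_nz:
  fixes x q :: "'a::field"
  assumes "\<And>i. i < N \<Longrightarrow> x*q^i \<noteq> 1" shows "qpoch x q N \<noteq> 0"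
  using assms unfolding qpoch_def by (auto simp: prod_zero_iff)

definition pp :: "'a::comm_ring_1 \<Rightarrow> 'a \<Rightarrow> nat \<Rightarrow> 'a" where
  "pp q c j = (\<Prod>i<j. c - q^(Suc i))"

lemma pp_0[simp]: "pp q c 0 = 1" by (simp add: pp_def)
lemma pp_Suc: "pp q c (Suc j) = pp q c j * (c - q^(Suc j))" by (simp add: pp_def)

lemma qpoch_qz: fixes q z :: "'a::field" assumes "z \<noteq> 0"
  shows "qpoch (q/z) q k * z^k = pp q z k"
proof (induction k)
  case (Suc k)
  have "qpoch (q/z) q (Suc k) * z^(Suc k) = (qpoch (q/z) q k * z^k) * ((1 - q/z*q^k)*z)"
    by (simp add: qpoch_Suc algebra_simps)
  also have "(1 - q/z*q^k)*z = z - q^(Suc k)" using assms by (simp add: field_simps)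
  finally show ?case using Suc by (simp add: pp_Suc)
qed simp

definition U :: "'a::field \<Rightarrow> 'a \<Rightarrow> nat \<Rightarrow> nat \<Rightarrow> 'a" where
  "U q c N k = pp q c k * qpoch c q (N-k) / (qpoch q q k * qpoch q q (N-k))"

definition w :: "'a::field \<Rightarrow> nat \<Rightarrow> nat \<Rightarrow> 'a" where
  "w q m l = (if l \<le> m then U q 0 m l else 0)"

locale qctx =
  fixes q :: "'a::field_char_0"
  assumes q0: "q \<noteq> 0" and qj: "\<And>j. j \<ge> 1 \<Longrightarrow> q^j \<noteq> 1"
begin

lemma qS: "q^(Suc j) \<noteq> 1" using qj[of "Suc j"] by simp
lemma qS': "1 - q^(Suc j) \<noteq> 0" using qS by simp
lemma qq_nz: "qpoch q q N \<noteq> 0"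
  by (rule qpoch_nz) (metis power_Suc qS)

lemma qpow_ne: assumes "k \<noteq> l" shows "q^k \<noteq> q^l"
proof
  assume h: "q^k = q^l"
  { fix a b :: nat assume "a < b" "q^a = q^b"
    moreover have "q^b = q^a * q^(b-a)" using \<open>a<b\<close> by (simp add: power_add[symmetric])
    ultimately have "q^a * q^(b-a) = q^a * 1" by simp
    then have "q^(b-a) = 1" using q0 by simp
    with qj[of "b-a"] \<open>a<b\<close> have False by linarith }
  with h assms show False by (metis linorder_neqE_nat)
qed

end

lemma pf_alg: fixes y p c q :: "'b::field"
  assumes "y \<noteq> 1" "y*p \<noteq> 1" "p \<noteq> 1" "p \<noteq> 0" "q \<noteq> 0"
  shows "(1 - c*y*p/q)/((1-y)*(1-y*p)) = ((1-c*p/q)/(1-p))/(1-y) + ((1-c/q)/(1-1/p))/(1-y*p)"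
proof -
  have a: "1-y \<noteq> 0" "1-y*p \<noteq> 0" "1-p \<noteq> 0" "p - 1 \<noteq> 0" using assms by auto
  have b: "1 - 1/p = (p-1)/p" using assms by (simp add: field_simps)
  show ?thesis unfolding b using a assms by (simp add: divide_simps) (simp add: algebra_simps)
qed

context qctx begin

lemma pw: "k \<le> N \<Longrightarrow> q^k * q^(Suc N - k) = q^(Suc N)"
  by (simp add: power_add[symmetric])
lemma pw2: "k \<le> N \<Longrightarrow> q^(Suc N - k) = q * q^(N - k)"
  by (simp add: Suc_diff_le)

lemma U_Suc: assumes "k \<le> N"
  shows "U q c (Suc N) k = U q c N k * (1 - c*q^(N-k)) / (1 - q^(Suc N - k))"
proof -
  have e: "Suc N - k = Suc (N-k)" using assms by (simp add: Suc_diff_le)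
  have n: "qpoch q q k \<noteq> 0" "qpoch q q (N-k) \<noteq> 0" "1 - q*q^(N-k) \<noteq> 0"
    using qq_nz qS'[of "N-k"] by auto
  show ?thesis unfolding U_def e qpoch_Suc using n
    by (simp add: field_simps)
qed

lemma inv_qpoch: "qpoch (c * inverse (q^M)) q M = (\<Prod>s<M. 1 - c*inverse(q^(Suc s)))"
proof (induction M arbitrary: c)
  case (Suc M)
  have e: "c * inverse (q^(Suc M)) * q = c * inverse (q^M)" using q0 by (simp add: field_simps)
  have "qpoch (c * inverse (q^(Suc M))) q (Suc M) = (1 - c*inverse(q^(Suc M))) * qpoch (c*inverse(q^M)) q M"
    by (simp only: qpoch_Suc_front e)
  also have "\<dots> = (1 - c*inverse(q^(Suc M))) * (\<Prod>s<M. 1 - c*inverse(q^(Suc s)))" using Suc by simp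
  finally show ?case by (simp only: prod.lessThan_Suc mult.commute)
qed simp

lemma qqprod: "qpoch q q M = (\<Prod>s<M. 1 - q^(Suc s))" by (simp add: qpoch_def)

lemma Bval: "(1 - c/q) * qpoch (c * inverse (q^(Suc N))) q N / qpoch (inverse (q^(Suc N))) q (Suc N)
   = U q c (Suc N) (Suc N)"
proof -
  have "(1 - c/q) * qpoch (c * inverse (q^(Suc N))) q N = qpoch (c * inverse (q^(Suc N))) q (Suc N)"
    using q0 by (simp add: qpoch_Suc field_simps)
  also have "\<dots> = (\<Prod>s<Suc N. 1 - c*inverse(q^(Suc s)))" by (rule inv_qpoch)
  finally have 1: "(1 - c/q) * qpoch (c * inverse (q^(Suc N))) q N = (\<Prod>s<Suc N. 1 - c*inverse(q^(Suc s)))" .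
  have 2: "qpoch (inverse (q^(Suc N))) q (Suc N) = (\<Prod>s<Suc N. 1 - inverse(q^(Suc s)))"
    using inv_qpoch[of 1 "Suc N"] by simp
  have 3: "(\<Prod>s<Suc N. 1 - c*inverse(q^(Suc s))) / (\<Prod>s<Suc N. 1 - inverse(q^(Suc s)))
      = (\<Prod>s<Suc N. (1 - c*inverse(q^(Suc s))) / (1 - inverse(q^(Suc s))))"
    by (simp add: prod_dividef)
  also have "\<dots> = (\<Prod>s<Suc N. (c - q^(Suc s)) / (1 - q^(Suc s)))"
  proof (rule prod.cong[OF refl])
    fix s
    have "q^(Suc s) \<noteq> 0" using q0 by simp
    moreover have "1 - q^(Suc s) \<noteq> 0" "q^(Suc s) - 1 \<noteq> 0" using qS[of s] by auto
    ultimately show "(1 - c*inverse(q^(Suc s))) / (1 - inverse(q^(Suc s))) = (c - q^(Suc s)) / (1 - q^(Suc s))"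
      by (simp add: field_simps)
  qed
  also have "\<dots> = pp q c (Suc N) / qpoch q q (Suc N)"
    unfolding pp_def qqprod by (simp add: prod_dividef)
  finally show ?thesis unfolding 1 2 U_def by simp
qed

lemma x0_ok: "k \<le> N \<Longrightarrow> inverse (q^(Suc N)) * q^k \<noteq> 1"
proof
  assume "k \<le> N" "inverse (q^(Suc N)) * q^k = 1"
  then have "q^k = q^(Suc N)" using q0 by (simp add: field_simps)
  with qpow_ne[of k "Suc N"] \<open>k \<le> N\<close> show False by simp
qed

definition Bc :: "'a \<Rightarrow> nat \<Rightarrow> nat \<Rightarrow> 'a" where
  "Bc c N k = (1-c/q)/(1 - inverse(q^(Suc N))*q^k)"

lemma pt: assumes k: "k \<le> N" and y1: "x*q^k \<noteq> 1" and y2': "x*q^(Suc N) \<noteq> 1"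
  shows "U q c (Suc N) k / (1 - x*q^k) =
      U q c N k * ((1 - c*x*q^N)/((1-x*q^k)*(1-x*q^(Suc N)))) - U q c N k * Bc c N k / (1-x*q^(Suc N))"
proof -
    define p where "p = q^(Suc N - k)"
    have p1: "p \<noteq> 1" unfolding p_def using qj[of "Suc N - k"] k by simp
    have p0: "p \<noteq> 0" unfolding p_def using q0 by simp
    have e1: "x*q^k*p = x*q^(Suc N)" using pw[OF k] by (simp add: p_def mult.assoc)
    have e2: "c*(x*q^k)*p/q = c*x*q^N" using e1 q0 by (simp add: field_simps)
    have e3: "c*p/q = c*q^(N-k)" unfolding p_def pw2[OF k] using q0 by simp
    have e4: "1/p = inverse(q^(Suc N))*q^k" using pw[OF k] p0 q0 unfolding p_def
      by (simp add: field_simps)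
    have y2: "x*q^k*p \<noteq> 1" unfolding e1 using y2' by simp
    have A: "(1 - c*x*q^N)/((1-x*q^k)*(1-x*q^(Suc N))) =
       ((1 - c*q^(N-k))/(1 - q^(Suc N - k)))/(1-x*q^k) + Bc c N k/(1-x*q^(Suc N))"
    proof -
      have "(1 - c*x*q^N)/((1-x*q^k)*(1-x*q^(Suc N))) = ((1-c*q^(N-k))/(1-p))/(1-x*q^k)
          + ((1-c/q)/(1 - inverse(q^(Suc N))*q^k))/(1-x*q^(Suc N))"
        using pf_alg[OF y1 y2 p1 p0 q0, of c] by (simp only: e1 e2 e3 e4)
      then show ?thesis by (simp only: p_def Bc_def)
    qed
    have xk: "1 - x*q^k \<noteq> 0" using y1 by simp
    show ?thesis unfolding U_Suc[OF k] A using xk by (simp add: field_simps)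
qed

lemma L1: "(\<And>k. k \<le> N \<Longrightarrow> x*q^k \<noteq> 1) \<Longrightarrow>
   (\<Sum>k\<le>N. U q c N k / (1 - x*q^k)) = qpoch (c*x) q N / qpoch x q (Suc N)"
proof (induction N arbitrary: x)
  case 0
  then show ?case by (simp add: U_def qpoch_Suc)
next
  case (Suc N)
  define B where "B k = Bc c N k" for k
  have Bsum: "(\<Sum>k\<le>N. U q c N k * B k) = U q c (Suc N) (Suc N)"
  proof -
    have "(\<Sum>k\<le>N. U q c N k * B k) = (1-c/q) * (\<Sum>k\<le>N. U q c N k / (1 - inverse(q^(Suc N))*q^k))"
      unfolding B_def Bc_def by (simp add: sum_distrib_left mult.commute)
    also have "\<dots> = (1-c/q) * (qpoch (c * inverse (q^(Suc N))) q N / qpoch (inverse (q^(Suc N))) q (Suc N))"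
      using Suc.IH[of "inverse (q^(Suc N))"] x0_ok by simp
    finally show ?thesis using Bval by simp
  qed
  have pt: "U q c (Suc N) k / (1 - x*q^k) =
      U q c N k * ((1 - c*x*q^N)/((1-x*q^k)*(1-x*q^(Suc N)))) - U q c N k * B k / (1-x*q^(Suc N))"
    if k: "k \<le> N" for k unfolding B_def using k Suc.prems[of k] Suc.prems[of "Suc N"] by (intro pt) auto
  have S1: "(\<Sum>k\<le>N. U q c (Suc N) k / (1 - x*q^k)) =
     (1 - c*x*q^N)/(1-x*q^(Suc N)) * (\<Sum>k\<le>N. U q c N k / (1-x*q^k)) - (\<Sum>k\<le>N. U q c N k * B k) / (1-x*q^(Suc N))"
    by (simp add: pt sum_subtractf sum_distrib_left sum_divide_distrib field_simps)
  have IH: "(\<Sum>k\<le>N. U q c N k / (1-x*q^k)) = qpoch (c*x) q N / qpoch x q (Suc N)"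
    using Suc.IH Suc.prems by simp
  have "(\<Sum>k\<le>Suc N. U q c (Suc N) k / (1 - x*q^k))
      = (\<Sum>k\<le>N. U q c (Suc N) k / (1 - x*q^k)) + U q c (Suc N) (Suc N) / (1 - x*q^(Suc N))"
    by simp
  also have "\<dots> = (1 - c*x*q^N)/(1-x*q^(Suc N)) * (qpoch (c*x) q N / qpoch x q (Suc N))"
    unfolding S1 IH Bsum by simp
  also have "\<dots> = qpoch (c*x) q (Suc N) / qpoch x q (Suc (Suc N))"
    by (simp only: qpoch_Suc[of "c*x" q N] qpoch_Suc[of x q "Suc N"] times_divide_times_eq ac_simps)
  finally show ?case .
qed


lemma Bsum: "(\<Sum>k\<le>N. U q c N k * Bc c N k) = U q c (Suc N) (Suc N)"
proof -
  have "(\<Sum>k\<le>N. U q c N k * Bc c N k) = (1-c/q) * (\<Sum>k\<le>N. U q c N k / (1 - inverse(q^(Suc N))*q^k))"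
    unfolding Bc_def by (simp add: sum_distrib_left mult.commute)
  also have "\<dots> = (1-c/q) * (qpoch (c * inverse (q^(Suc N))) q N / qpoch (inverse (q^(Suc N))) q (Suc N))"
    using L1[of N "inverse (q^(Suc N))"] x0_ok by simp
  finally show ?thesis using Bval by simp
qed

lemma sum_split0: "(\<Sum>k\<le>(N::nat). f k) = f 0 + (\<Sum>k\<in>{1..N}. f k)"
  unfolding atMost_atLeast0 by (subst sum.atLeast_Suc_atMost) simp_all

end

definition SS :: "'a::field \<Rightarrow> 'a \<Rightarrow> nat \<Rightarrow> 'a" where
  "SS q z N = (\<Sum>k=1..N. q^k / ((1 - z * q^(k-1)) * (1 - q^k)))"

lemma SS_Suc: "SS q z (Suc N) = SS q z N + q^(Suc N) / ((1 - z*q^N) * (1 - q^(Suc N)))"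
  by (simp add: SS_def)

context qctx begin

lemma L2: assumes zj: "\<And>j. z*q^j \<noteq> 1"
  shows "(\<Sum>k\<in>{1..N}. U q z N k / (1 - q^k)) = - (qpoch z q N / qpoch q q N) * (1 - z/q) * SS q z N"
proof (induction N)
  case 0 then show ?case by (simp add: SS_def)
next
  case (Suc N)
  have pt1: "U q z (Suc N) k / (1 - q^k) =
      U q z N k * ((1 - z*q^N)/((1-q^k)*(1-q^(Suc N)))) - U q z N k * Bc z N k / (1-q^(Suc N))"
    if k: "k \<in> {1..N}" for k
    using pt[of k N 1 z] k qj[of k] qS[of N] by simp
  have "(\<Sum>k\<in>{1..N}. U q z (Suc N) k / (1 - q^k)) =
     (1 - z*q^N)/(1-q^(Suc N)) * (\<Sum>k\<in>{1..N}. U q z N k / (1-q^k)) - (\<Sum>k\<in>{1..N}. U q z N k * Bc z N k) / (1-q^(Suc N))"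
    by (simp add: pt1 sum_subtractf sum_distrib_left sum_divide_distrib field_simps)
  also have "(\<Sum>k\<in>{1..N}. U q z N k * Bc z N k) = U q z (Suc N) (Suc N) - U q z N 0 * Bc z N 0"
    using Bsum[of z N] sum_split0[of "\<lambda>k. U q z N k * Bc z N k" N] by (metis add_diff_cancel_left')
  finally have rec: "(\<Sum>k\<in>{1..Suc N}. U q z (Suc N) k / (1 - q^k)) =
     (1 - z*q^N)/(1-q^(Suc N)) * (\<Sum>k\<in>{1..N}. U q z N k / (1-q^k)) + U q z N 0 * Bc z N 0 / (1-q^(Suc N))"
    by (simp add: diff_divide_distrib)
  define P where "P = qpoch z q N"
  define Q where "Q = qpoch q q N"
  define a where "a = q^(Suc N)"
  define b where "b = z*q^N"
  have P0: "P \<noteq> 0" unfolding P_def by (rule qpoch_nz) (use zj in auto)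
  have Q0: "Q \<noteq> 0" unfolding Q_def by (rule qq_nz)
  have a1: "1 - a \<noteq> 0" "a - 1 \<noteq> 0" "a \<noteq> 0" unfolding a_def using qS[of N] q0 by auto
  have b1: "1 - b \<noteq> 0" unfolding b_def using zj[of N] by auto
  have h: "z*a = q*b" unfolding a_def b_def by simp
  have U0: "U q z N 0 = P/Q" unfolding U_def P_def Q_def by simp
  have B0: "Bc z N 0 = (1 - z/q) * a / (a - 1)" unfolding Bc_def a_def using a1[unfolded a_def]
    by (simp add: field_simps)
  have qa: "qpoch z q (Suc N) = P * (1-b)" "qpoch q q (Suc N) = Q * (1-a)"
    unfolding P_def Q_def a_def b_def by (simp_all add: qpoch_Suc)
  show ?case unfolding rec Suc.IH SS_Suc U0 B0 qa
    unfolding P_def[symmetric] Q_def[symmetric] a_def[symmetric] b_def[symmetric]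
    using P0 Q0 a1 b1 q0 h by (simp add: divide_simps) (simp add: algebra_simps)
qed

end


definition T :: "'a::field \<Rightarrow> (nat \<Rightarrow> 'a) \<Rightarrow> 'a \<Rightarrow> nat \<Rightarrow> nat \<Rightarrow> 'a" where
  "T q \<phi> c n m = (\<Sum>k\<le>n. w q n k * (\<Sum>l\<le>m. w q m l * (qpoch c q m * qpoch (c*q^l) q n * \<phi>(k+l))))"
context qctx begin
lemma w_out[simp]: "m < l \<Longrightarrow> w q m l = 0" by (simp add: w_def)
lemma w00[simp]: "w q 0 0 = 1" by (simp add: w_def U_def)

lemma w0: "(1 - q^(Suc m)) * w q (Suc m) 0 = w q m 0"
  using qq_nz[of m] qS'[of m] by (simp add: w_def U_def qpoch_Suc field_simps)
lemma alg_wS: fixes A Q1 Q2 X Y :: "'b::field"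
  assumes "Q1 \<noteq> 0" "Q2 \<noteq> 0" "1 - X \<noteq> 0" "1 - Y \<noteq> 0"
  shows "(1 - X*Y) * (A*(0-X)/((Q1*(1-X))*(Q2*(1-Y)))) = A*(0-X)/((Q1*(1-X))*Q2) - X*Y*(A/(Q1*(Q2*(1-Y))))"
  using assms by (simp add: divide_simps) (simp add: algebra_simps)

lemma alg_wS2: fixes A Q X :: "'b::field"
  assumes "Q \<noteq> 0" "1 - X \<noteq> 0"
  shows "(1 - X) * (A*(0-X)/((Q*(1-X))*1)) = 0 - X*(A/(Q*1))"
  using assms by (simp add: divide_simps)

lemma wS: assumes "l \<le> m"
  shows "(1 - q^(Suc m)) * w q (Suc m) (Suc l) = w q m (Suc l) - q^(Suc m) * w q m l"
proof (cases "l = m")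
  case True
  have e: "w q (Suc m) (Suc m) = pp q 0 m * (0 - q^(Suc m)) / ((qpoch q q m * (1 - q^(Suc m))) * 1)"
    unfolding w_def U_def by (simp only: order_refl if_True diff_self qpoch_0 qpoch_zero_base pp_Suc qpoch_Suc) simp
  have e2: "w q m m = pp q 0 m / (qpoch q q m * 1)" unfolding w_def U_def by simp
  show ?thesis unfolding True e e2 using alg_wS2[OF qq_nz[of m] qS'[of m]] by simp
next
  case False
  with assms have "l < m" by simp
  then obtain d where m: "m = Suc (l + d)" using less_imp_Suc_add by blast
  have e1: "Suc m - Suc l = Suc d" "m - Suc l = d" "m - l = Suc d" using m by auto
  have l1: "Suc l \<le> Suc m" "Suc l \<le> m" "l \<le> m" using m by auto
  have XY: "q^(Suc m) = q^(Suc l)*q^(Suc d)" unfolding m by (simp add: power_add[symmetric])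
  have a1: "w q (Suc m) (Suc l) = pp q 0 l * (0 - q^(Suc l)) / ((qpoch q q l * (1 - q^(Suc l))) * (qpoch q q d * (1 - q^(Suc d))))"
    unfolding w_def U_def using l1 by (simp add: e1 pp_Suc qpoch_Suc)
  have a2: "w q m (Suc l) = pp q 0 l * (0 - q^(Suc l)) / ((qpoch q q l * (1 - q^(Suc l))) * qpoch q q d)"
    unfolding w_def U_def using l1 by (simp add: e1 pp_Suc qpoch_Suc)
  have a3: "w q m l = pp q 0 l / (qpoch q q l * (qpoch q q d * (1 - q^(Suc d))))"
    unfolding w_def U_def using l1 by (simp add: e1 pp_Suc qpoch_Suc)
  show ?thesis unfolding a1 a2 a3 XY by (rule alg_wS[OF qq_nz qq_nz qS' qS'])
qed

lemma wstep: "(1 - q^(Suc m)) * (\<Sum>l\<le>Suc m. w q (Suc m) l * F l)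
   = (\<Sum>l\<le>m. w q m l * F l) - q^(Suc m) * (\<Sum>l\<le>m. w q m l * F (Suc l))"
proof -
  have a: "(\<Sum>l\<le>m. w q m l * F l) = w q m 0 * F 0 + (\<Sum>l\<le>m. w q m (Suc l) * F (Suc l))"
  proof -
    have "(\<Sum>l\<le>m. w q m l * F l) = (\<Sum>l\<le>Suc m. w q m l * F l)" by simp
    also have "\<dots> = w q m 0 * F 0 + (\<Sum>l\<le>m. w q m (Suc l) * F (Suc l))"
      by (simp only: sum.atMost_Suc_shift)
    finally show ?thesis .
  qed
  have "(1 - q^(Suc m)) * (\<Sum>l\<le>Suc m. w q (Suc m) l * F l)
     = (1 - q^(Suc m)) * w q (Suc m) 0 * F 0 + (\<Sum>l\<le>m. (1 - q^(Suc m)) * w q (Suc m) (Suc l) * F (Suc l))"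
    by (simp only: sum.atMost_Suc_shift sum_distrib_left distrib_left mult.assoc)
  also have "\<dots> = w q m 0 * F 0 + (\<Sum>l\<le>m. (w q m (Suc l) - q^(Suc m) * w q m l) * F (Suc l))"
    using w0 wS by simp
  also have "\<dots> = (\<Sum>l\<le>m. w q m l * F l) - q^(Suc m) * (\<Sum>l\<le>m. w q m l * F (Suc l))"
    unfolding a by (simp add: algebra_simps sum_subtractf sum_distrib_left)
  finally show ?thesis .
qed

lemma wsh: assumes "l < m"
  shows "w q m (Suc l) * (1 - q^(Suc l)) = - (q^(Suc l) * (1 - q^(m-l)) * w q m l)"
proof -
  obtain d where m: "m = Suc (l + d)" using assms less_imp_Suc_add by blast
  have e1: "m - Suc l = d" "m - l = Suc d" using m by auto
  have n: "qpoch q q l \<noteq> 0" "qpoch q q d \<noteq> 0" "1 - q*q^l \<noteq> 0" "1 - q*q^d \<noteq> 0"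
    using qq_nz qS' by auto
  show ?thesis using n assms m unfolding w_def U_def
    by (simp add: e1 qpoch_Suc pp_Suc divide_simps)
qed

lemma W2: "(\<Sum>l\<le>m. w q m l * (1 - q^l) * F l) = - (\<Sum>l<m. q^(Suc l) * (1 - q^(m-l)) * w q m l * F (Suc l))"
proof -
  have "(\<Sum>l\<le>m. w q m l * (1 - q^l) * F l) = (\<Sum>l<Suc m. w q m l * (1 - q^l) * F l)"
    by (simp add: lessThan_Suc_atMost)
  also have "\<dots> = (\<Sum>l<m. w q m (Suc l) * (1 - q^(Suc l)) * F (Suc l))"
    by (simp only: sum.lessThan_Suc_shift) simp
  also have "\<dots> = (\<Sum>l<m. - (q^(Suc l) * (1 - q^(m-l)) * w q m l) * F (Suc l))"
    by (rule sum.cong[OF refl], simp only: lessThan_iff wsh)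
  finally show ?thesis by (simp add: sum_negf)
qed

end


context qctx begin

lemma R2: "(1 - q^(Suc m)) * T q \<phi> c n (Suc m) =
   (1 - c*q^m) * T q \<phi> c n m - q^(Suc m)*(1-c) * T q (\<lambda>j. \<phi> (Suc j)) (c*q) n m"
proof -
  define A where "A k = (\<Sum>l\<le>m. w q m l * (qpoch c q m * qpoch (c*q^l) q n * \<phi>(k+l)))" for k
  define B where "B k = (\<Sum>l\<le>m. w q m l * (qpoch (c*q) q m * qpoch (c*q*q^l) q n * \<phi>(Suc (k+l))))" for k
  have inner1: "(\<Sum>l\<le>m. w q m l * (qpoch c q (Suc m) * qpoch (c*q^l) q n * \<phi>(k+l))) = (1 - c*q^m) * A k" for k
    unfolding A_def by (simp add: sum_distrib_left qpoch_Suc mult_ac)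
  have inner2: "(\<Sum>l\<le>m. w q m l * (qpoch c q (Suc m) * qpoch (c*q^(Suc l)) q n * \<phi>(k+Suc l))) = (1-c) * B k" for k
    unfolding B_def by (simp add: sum_distrib_left qpoch_Suc_front mult_ac)
  have "(1 - q^(Suc m)) * T q \<phi> c n (Suc m) = (\<Sum>k\<le>n. w q n k * ((1 - q^(Suc m)) *
      (\<Sum>l\<le>Suc m. w q (Suc m) l * (qpoch c q (Suc m) * qpoch (c*q^l) q n * \<phi>(k+l)))))"
    unfolding T_def sum_distrib_left by (simp add: mult_ac)
  also have "\<dots> = (\<Sum>k\<le>n. w q n k * ((1 - c*q^m) * A k - q^(Suc m) * ((1-c) * B k)))"
    by (simp only: wstep inner1 inner2)
  also have "\<dots> = (1 - c*q^m) * (\<Sum>k\<le>n. w q n k * A k) - q^(Suc m)*(1-c) * (\<Sum>k\<le>n. w q n k * B k)"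
    by (simp add: sum_subtractf sum_distrib_left sum.distrib algebra_simps)
  also have "\<dots> = (1 - c*q^m) * T q \<phi> c n m - q^(Suc m)*(1-c) * T q (\<lambda>j. \<phi> (Suc j)) (c*q) n m"
    unfolding T_def A_def B_def by (simp add: mult.assoc)
  finally show ?thesis .
qed


lemma R1: "(1 - q^(Suc n)) * T q \<phi> c (Suc n) m =
   (1 - c*q^n) * T q \<phi> c n m - q^(Suc n)*(1-c) * T q (\<lambda>j. \<phi> (Suc j)) (c*q) n m"
proof -
  define H where "H k = (\<Sum>l\<le>m. w q m l * (qpoch c q m * qpoch (c*q^l) q (Suc n) * \<phi>(k+l)))" for k
  define E where "E k = (\<Sum>l\<le>m. w q m l * (qpoch c q m * qpoch (c*q^l) q n * \<phi>(k+l)))" for k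
  define E' where "E' k = (\<Sum>l\<le>m. w q m l * (qpoch (c*q) q m * qpoch (c*q*q^l) q n * \<phi>(Suc (k+l))))" for k
  define F where "F k l = qpoch c q m * qpoch (c*q^l) q n * \<phi>(k+l) * (c*q^n)" for k l
  have d1: "H k - (1 - c*q^n) * E k = (\<Sum>l\<le>m. w q m l * (1 - q^l) * F k l)" for k
    unfolding H_def E_def F_def sum_distrib_left sum_subtractf[symmetric]
    by (rule sum.cong[OF refl]) (simp add: qpoch_Suc algebra_simps)
  have d2: "H (Suc k) - (1-c) * E' k =
     (\<Sum>l<m. w q m l * (qpoch c q m * qpoch (c*q^(Suc l)) q n * \<phi>(Suc (k+l)) * (c*(q^m - q^l))))" for k
  proof -
    have "H (Suc k) - (1-c) * E' k =
       (\<Sum>l\<le>m. w q m l * (qpoch c q m * qpoch (c*q^(Suc l)) q n * \<phi>(Suc (k+l)) * (c*(q^m - q^l))))"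
    proof -
      have fr: "(1-c) * qpoch (c*q) q m = qpoch c q m * (1 - c*q^m)"
        using qpoch_Suc_front[of c q m] qpoch_Suc[of c q m] by simp
      have pt: "w q m l * (qpoch c q m * qpoch (c*q^l) q (Suc n) * \<phi>(Suc k+l)) -
          (1-c) * (w q m l * (qpoch (c*q) q m * qpoch (c*q*q^l) q n * \<phi>(Suc (k+l))))
        = w q m l * (qpoch c q m * qpoch (c*q^(Suc l)) q n * \<phi>(Suc (k+l)) * (c*(q^m - q^l)))" for l
      proof -
        have "(1-c) * (w q m l * (qpoch (c*q) q m * qpoch (c*q*q^l) q n * \<phi>(Suc (k+l))))
            = w q m l * (((1-c) * qpoch (c*q) q m) * qpoch (c*q^(Suc l)) q n * \<phi>(Suc (k+l)))"
          by (simp add: mult_ac)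
        also have "\<dots> = w q m l * (qpoch c q m * (1 - c*q^m) * qpoch (c*q^(Suc l)) q n * \<phi>(Suc (k+l)))"
          unfolding fr ..
        finally have a: "(1-c) * (w q m l * (qpoch (c*q) q m * qpoch (c*q*q^l) q n * \<phi>(Suc (k+l)))) =
          w q m l * (qpoch c q m * (1 - c*q^m) * qpoch (c*q^(Suc l)) q n * \<phi>(Suc (k+l)))" .
        have b: "qpoch (c*q^l) q (Suc n) = (1 - c*q^l) * qpoch (c*q^(Suc l)) q n"
          using qpoch_Suc_front[of "c*q^l" q n] by (simp add: mult_ac)
        show ?thesis unfolding a b by (simp add: algebra_simps)
      qed
      show ?thesis unfolding H_def E'_def sum_distrib_left sum_subtractf[symmetric]
        by (rule sum.cong[OF refl]) (rule pt)
    qed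
    also have "\<dots> = (\<Sum>l<m. w q m l * (qpoch c q m * qpoch (c*q^(Suc l)) q n * \<phi>(Suc (k+l)) * (c*(q^m - q^l))))"
      by (simp add: lessThan_Suc_atMost[symmetric])
    finally show ?thesis .
  qed
  have key: "H k - q^(Suc n) * H (Suc k) = (1 - c*q^n) * E k - q^(Suc n)*(1-c) * E' k" for k
  proof -
    have "H k - (1 - c*q^n) * E k = - (\<Sum>l<m. q^(Suc l) * (1 - q^(m-l)) * w q m l * F k (Suc l))"
      unfolding d1 by (rule W2)
    also have "\<dots> = q^(Suc n) * (\<Sum>l<m. w q m l * (qpoch c q m * qpoch (c*q^(Suc l)) q n * \<phi>(Suc (k+l)) * (c*(q^m - q^l))))"
      unfolding sum_distrib_left sum_negf[symmetric]
    proof (rule sum.cong[OF refl])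
      fix l assume "l \<in> {..<m}"
      then have "q^m = q^l * q^(m-l)" by (simp add: power_add[symmetric])
      then show "- (q^(Suc l) * (1 - q^(m-l)) * w q m l * F k (Suc l)) =
          q^(Suc n) * (w q m l * (qpoch c q m * qpoch (c*q^(Suc l)) q n * \<phi>(Suc (k+l)) * (c*(q^m - q^l))))"
        unfolding F_def by (simp add: algebra_simps)
    qed
    also have "\<dots> = q^(Suc n) * (H (Suc k) - (1-c) * E' k)" unfolding d2 ..
    finally show ?thesis by (simp add: algebra_simps)
  qed
  have "(1 - q^(Suc n)) * T q \<phi> c (Suc n) m = (1 - q^(Suc n)) * (\<Sum>k\<le>Suc n. w q (Suc n) k * H k)"
    unfolding T_def H_def ..
  also have "\<dots> = (\<Sum>k\<le>n. w q n k * H k) - q^(Suc n) * (\<Sum>k\<le>n. w q n k * H (Suc k))"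
    by (rule wstep)
  also have "\<dots> = (\<Sum>k\<le>n. w q n k * (H k - q^(Suc n) * H (Suc k)))"
    by (simp add: sum_subtractf sum_distrib_left algebra_simps)
  also have "\<dots> = (\<Sum>k\<le>n. w q n k * ((1 - c*q^n) * E k - q^(Suc n)*(1-c) * E' k))"
    by (simp only: key)
  also have "\<dots> = (1 - c*q^n) * (\<Sum>k\<le>n. w q n k * E k) - q^(Suc n)*(1-c) * (\<Sum>k\<le>n. w q n k * E' k)"
    by (simp add: sum_subtractf sum_distrib_left sum.distrib algebra_simps)
  also have "\<dots> = (1 - c*q^n) * T q \<phi> c n m - q^(Suc n)*(1-c) * T q (\<lambda>j. \<phi> (Suc j)) (c*q) n m"
    unfolding T_def E_def E'_def by simp
  finally show ?thesis .
qed

lemma Tsym: "T q \<phi> c n m = T q \<phi> c m n"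
proof (induction m arbitrary: n c \<phi>)
  case 0
  show ?case by (simp add: T_def)
next
  case (Suc m)
  have "(1 - q^(Suc m)) * T q \<phi> c n (Suc m) =
     (1 - c*q^m) * T q \<phi> c n m - q^(Suc m)*(1-c) * T q (\<lambda>j. \<phi> (Suc j)) (c*q) n m" by (rule R2)
  also have "\<dots> = (1 - c*q^m) * T q \<phi> c m n - q^(Suc m)*(1-c) * T q (\<lambda>j. \<phi> (Suc j)) (c*q) m n"
    using Suc.IH by simp
  also have "\<dots> = (1 - q^(Suc m)) * T q \<phi> c (Suc m) n" by (rule R1[symmetric])
  finally show ?case using qS'[of m] by simp
qed

end


locale qzctx = qctx +
  fixes z :: 'a
  assumes z0: "z \<noteq> 0" and zj: "\<And>j. z*q^j \<noteq> 1"
begin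

definition \<phi> :: "nat \<Rightarrow> 'a" where "\<phi> j = (if j = 0 then 0 else 1/(1 - q^j))"
definition Hh :: "nat \<Rightarrow> 'a" where "Hh N = (\<Sum>k\<in>{1..N}. w q N k / (1 - q^k))"
definition V0 :: "nat \<Rightarrow> 'a" where "V0 N = (\<Sum>k\<in>{1..N}. U q z N k / (1 - q^k))"
definition f :: "nat \<Rightarrow> nat \<Rightarrow> 'a" where
  "f n m = (\<Sum>k=1..n. qpoch (q/z) q k * qpoch z q (n-k) * qpoch z q m
              / (qpoch q q k * qpoch q q (n-k) * qpoch (q^k) q (m+1)) * z^k)"

lemma zq_nz: "qpoch z q N \<noteq> 0" by (rule qpoch_nz) (use zj in auto)

lemma qpow_nz1: "1 \<le> j \<Longrightarrow> 1 - q^j \<noteq> 0" using qj by auto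

lemma w_U: "k \<le> N \<Longrightarrow> w q N k = U q 0 N k" by (simp add: w_def)

lemma inv_qk: assumes "1 \<le> k"
  shows "1 / qpoch (q^k) q (Suc M) = (\<Sum>l\<le>M. w q M l / (1 - q^(k+l)))"
proof -
  have "(\<Sum>l\<le>M. U q 0 M l / (1 - q^k*q^l)) = qpoch (0*q^k) q M / qpoch (q^k) q (Suc M)"
    by (rule L1) (use assms qj in \<open>auto simp: power_add[symmetric]\<close>)
  then show ?thesis by (simp add: w_U power_add)
qed

lemma F1: "f n m = (\<Sum>l\<le>m. w q m l * (qpoch z q m * (\<Sum>k\<in>{1..n}. U q z n k / (1 - q^(k+l)))))"
proof -
  have "f n m = (\<Sum>k\<in>{1..n}. U q z n k * qpoch z q m * (1 / qpoch (q^k) q (Suc m)))"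
    unfolding f_def
  proof (rule sum.cong[OF refl])
    fix k
    have "qpoch (q/z) q k * z^k = pp q z k" by (rule qpoch_qz[OF z0])
    then show "qpoch (q/z) q k * qpoch z q (n-k) * qpoch z q m
              / (qpoch q q k * qpoch q q (n-k) * qpoch (q^k) q (m+1)) * z^k
          = U q z n k * qpoch z q m * (1 / qpoch (q^k) q (Suc m))"
      unfolding U_def by (simp add: field_simps)
  qed
  also have "\<dots> = (\<Sum>k\<in>{1..n}. \<Sum>l\<le>m. w q m l * (qpoch z q m * (U q z n k / (1 - q^(k+l)))))"
    by (rule sum.cong[OF refl]) (simp add: inv_qk sum_distrib_left mult_ac)
  also have "\<dots> = (\<Sum>l\<le>m. w q m l * (qpoch z q m * (\<Sum>k\<in>{1..n}. U q z n k / (1 - q^(k+l)))))"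
    by (subst sum.swap) (simp add: sum_distrib_left)
  finally show ?thesis .
qed

lemma T1: "T q \<phi> z n m = (\<Sum>l\<le>m. w q m l * (qpoch z q m * (\<Sum>k\<le>n. w q n k * (qpoch (z*q^l) q n * \<phi>(k+l)))))"
  unfolding T_def sum_distrib_left by (subst sum.swap) (simp add: mult_ac)

lemma perl: "(\<Sum>k\<in>{1..n}. U q z n k / (1 - q^(k+l))) =
   (\<Sum>k\<le>n. w q n k * (qpoch (z*q^l) q n * \<phi>(k+l))) +
   (if l = 0 then V0 n - qpoch z q n * Hh n else - (qpoch z q n / qpoch q q n) / (1 - q^l))"
proof (cases "l = 0")
  case True
  have "(\<Sum>k\<le>n. w q n k * (qpoch z q n * \<phi> k)) = qpoch z q n * Hh n"
    unfolding sum_split0[of _ n] Hh_def by (simp add: \<phi>_def sum_distrib_left mult_ac)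
  then show ?thesis using True by (simp add: V0_def)
next
  case False
  then have l1: "1 \<le> l" by simp
  have ok: "q^l * q^k \<noteq> 1" for k using qj[of "l+k"] l1 by (simp add: power_add)
  have a: "(\<Sum>k\<le>n. U q z n k / (1 - q^(k+l))) = qpoch (z*q^l) q n / qpoch (q^l) q (Suc n)"
    using L1[of n "q^l" z] ok by (simp add: power_add mult_ac)
  have b: "(\<Sum>k\<le>n. w q n k / (1 - q^(k+l))) = 1 / qpoch (q^l) q (Suc n)"
    using inv_qk[OF l1, of n] by (simp add: add.commute)
  have c: "(\<Sum>k\<le>n. w q n k * (qpoch (z*q^l) q n * \<phi>(k+l))) = qpoch (z*q^l) q n * (\<Sum>k\<le>n. w q n k / (1 - q^(k+l)))"
    unfolding sum_distrib_left using l1 by (intro sum.cong) (auto simp: \<phi>_def)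
  have d: "(\<Sum>k\<le>n. U q z n k / (1 - q^(k+l))) = U q z n 0 / (1 - q^l) + (\<Sum>k\<in>{1..n}. U q z n k / (1 - q^(k+l)))"
    using sum_split0[of "\<lambda>k. U q z n k / (1 - q^(k+l))" n] by simp
  have U0: "U q z n 0 = qpoch z q n / qpoch q q n" by (simp add: U_def)
  show ?thesis using a b c d False unfolding U0 by (simp add: algebra_simps)
qed

lemma Fform: "f n m = qpoch z q m / qpoch q q m * V0 n + T q \<phi> z n m
   - qpoch z q m * qpoch z q n * (Hh n / qpoch q q m + Hh m / qpoch q q n)"
proof -
  define G where "G l = (if l = 0 then V0 n - qpoch z q n * Hh n else - (qpoch z q n / qpoch q q n) / (1 - q^l))" for l
  have "f n m - T q \<phi> z n m = (\<Sum>l\<le>m. w q m l * (qpoch z q m * G l))"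
    unfolding F1 T1 perl G_def[symmetric] by (simp add: sum_subtractf[symmetric] algebra_simps)
  also have "\<dots> = w q m 0 * (qpoch z q m * (V0 n - qpoch z q n * Hh n))
      - qpoch z q m * (qpoch z q n / qpoch q q n) * Hh m"
    unfolding sum_split0[of _ m] Hh_def G_def by (simp add: sum_distrib_left sum_negf algebra_simps)
  finally have eq: "f n m = w q m 0 * (qpoch z q m * (V0 n - qpoch z q n * Hh n))
      - qpoch z q m * (qpoch z q n / qpoch q q n) * Hh m + T q \<phi> z n m"
    by (simp add: diff_eq_eq)
  have w0v: "w q m 0 = 1 / qpoch q q m" by (simp add: w_def U_def)
  show ?thesis unfolding eq w0v using qq_nz[of m] qq_nz[of n]
    by (simp add: field_simps)

qed

end


theorem corollary6p1:
  fixes q z :: "'a::field_char_0" and m n :: nat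
  assumes "q \<noteq> 0" and "z \<noteq> 0"
    and "\<And>j. j \<ge> 1 \<Longrightarrow> q ^ j \<noteq> 1"
    and "\<And>j. z * q ^ j \<noteq> 1"
  shows "(\<Sum>k=1..n. qpoch (q/z) q k * qpoch z q (n-k) * qpoch z q m
              / (qpoch q q k * qpoch q q (n-k) * qpoch (q^k) q (m+1)) * z^k)
       - (\<Sum>k=1..m. qpoch (q/z) q k * qpoch z q (m-k) * qpoch z q n
              / (qpoch q q k * qpoch q q (m-k) * qpoch (q^k) q (n+1)) * z^k)
       = (1 - z / q) * qpoch z q m * qpoch z q n / (qpoch q q m * qpoch q q n)
         * ((\<Sum>k=1..m. q^k / ((1 - z * q^(k-1)) * (1 - q^k)))
            - (\<Sum>k=1..n. q^k / ((1 - z * q^(k-1)) * (1 - q^k))))"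
proof -
  interpret qzctx q z using assms by unfold_locales auto
  have v: "V0 N = - (qpoch z q N / qpoch q q N) * (1 - z/q) * SS q z N" for N
    unfolding V0_def by (rule L2) (rule zj)
  have "f n m - f m n = qpoch z q m / qpoch q q m * V0 n - qpoch z q n / qpoch q q n * V0 m"
    unfolding Fform Tsym[of \<phi> z n m] by (simp add: algebra_simps)
  also have "\<dots> = (1 - z / q) * qpoch z q m * qpoch z q n / (qpoch q q m * qpoch q q n)
         * (SS q z m - SS q z n)"
    unfolding v using qq_nz[of m] qq_nz[of n] q0 by (simp add: field_simps)
  finally show ?thesis unfolding f_def SS_def by simp
qed

end
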